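(* Let $\alpha_1,\beta_1\in\mathbb R$, $\mu_1\in\mathbb C$, and consider the equation $$ i\partial_t\phi+|\phi|^2\partial_{xx}\phi+\alpha_1\phi|\partial_x\phi|^2+\beta_1\overline{\phi}(\partial_x\phi)^2+\mu_1|\phi|^2\phi=0. \qquad (\ast)$$ Let $0<x_1<1$, $\delta>0$, and let $f\in L^\infty([0,\delta];C^{3,1}([-x_1,x_1]))$ be a solution of $(\ast)$ with $f_0=f(0,\cdot)$ satisfying $f_0(0)=0$ and $f_x(0,0)>0$ real, and assume $x_1$ is small enough that $$\Big(\sup_{x\in[-x_1,x_1]}|f_{xx}(0,x)|\Big)\,x_1<\frac{f_x(0,0)}{2}.$$ Set $M=\|f\|_{L^\infty([0,\delta];C^{3,1})}$. Then there is a constant $C>0$ (independent of $f$, $t$, $x$) such that for all $t\in[0,\delta]$ and $|x|\le x_1$, $$|f(t,x)|\le|f_0(x)|\exp(CM^2t)$$ and $$\big|\partial_t(|f(t,x)|^2)\big|\le CM\exp(CM^2\delta)\big(1+(f_x(0,0))^{-1}M\big)^3\big(|f_0(x)|^3+tM^3|f_0(x)|^2\big).$$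
   Context: $C^{3,1}([-x_1,x_1])$ denotes functions on $[-x_1,x_1]$ with Lipschitz third derivative. *)

theory Defs
  imports "HOL-Analysis.Analysis"
begin

definition Ix :: "real \<Rightarrow> real set" where
  "Ix x1 = {-x1..x1}"

definition Dx :: "real \<Rightarrow> (real \<Rightarrow> complex) \<Rightarrow> real \<Rightarrow> complex" where
  "Dx x1 g = (\<lambda>x. vector_derivative g (at x within Ix x1))"

definition C31_on :: "real \<Rightarrow> (real \<Rightarrow> complex) \<Rightarrow> bool" where
  "C31_on x1 g \<longleftrightarrow>
     (\<forall>x\<in>Ix x1. (g has_vector_derivative Dx x1 g x) (at x within Ix x1)) \<and>
     (\<forall>x\<in>Ix x1. (Dx x1 g has_vector_derivative Dx x1 (Dx x1 g) x) (at x within Ix x1)) \<and>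
     (\<forall>x\<in>Ix x1. (Dx x1 (Dx x1 g) has_vector_derivative Dx x1 (Dx x1 (Dx x1 g)) x)
                   (at x within Ix x1)) \<and>
     (\<exists>L. L-lipschitz_on (Ix x1) (Dx x1 (Dx x1 (Dx x1 g))))"

definition C31_norm :: "real \<Rightarrow> (real \<Rightarrow> complex) \<Rightarrow> real" where
  "C31_norm x1 g =
     (SUP x\<in>Ix x1. cmod (g x)) + (SUP x\<in>Ix x1. cmod (Dx x1 g x))
     + (SUP x\<in>Ix x1. cmod (Dx x1 (Dx x1 g) x))
     + (SUP x\<in>Ix x1. cmod (Dx x1 (Dx x1 (Dx x1 g)) x))
     + (SUP p\<in>{(x,y). x \<in> Ix x1 \<and> y \<in> Ix x1 \<and> x \<noteq> y}.
          cmod (Dx x1 (Dx x1 (Dx x1 g)) (fst p) - Dx x1 (Dx x1 (Dx x1 g)) (snd p))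
          / \<bar>fst p - snd p\<bar>)"

definition solves_eq ::
  "real \<Rightarrow> real \<Rightarrow> complex \<Rightarrow> real \<Rightarrow> real \<Rightarrow> (real \<Rightarrow> real \<Rightarrow> complex) \<Rightarrow> bool" where
  "solves_eq \<alpha> \<beta> \<mu> x1 \<delta> f \<longleftrightarrow>
     (\<forall>t\<in>{0..\<delta>}. \<forall>x\<in>Ix x1. \<exists>ft.
        ((\<lambda>s. f s x) has_vector_derivative ft) (at t within {0..\<delta>}) \<and>
        \<i> * ft + complex_of_real ((cmod (f t x))\<^sup>2) * Dx x1 (Dx x1 (f t)) x
        + complex_of_real \<alpha> * f t x * complex_of_real ((cmod (Dx x1 (f t) x))\<^sup>2)
        + complex_of_real \<beta> * cnj (f t x) * (Dx x1 (f t) x)\<^sup>2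
        + \<mu> * complex_of_real ((cmod (f t x))\<^sup>2) * f t x = 0)"

end

theory Submission
  imports Defs
begin

lemma mvt_vec:
  fixes h h' :: "real \<Rightarrow> complex"
  assumes "convex S"
    and d: "\<And>y. y \<in> S \<Longrightarrow> (h has_vector_derivative h' y) (at y within S)"
    and B: "\<And>y. y \<in> S \<Longrightarrow> cmod (h' y) \<le> B"
    and "x \<in> S" "y \<in> S"
  shows "cmod (h x - h y) \<le> B * \<bar>x - y\<bar>"
proof -
  have "norm (h x - h y) \<le> B * norm (x - y)"
  proof (rule differentiable_bound[OF assms(1), where f' = "\<lambda>y d. d *\<^sub>R h' y"])
    show "(h has_derivative (\<lambda>d. d *\<^sub>R h' y)) (at y within S)" if "y \<in> S" for y
      using d[OF that] by (simp add: has_vector_derivative_def)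
    show "onorm (\<lambda>d. d *\<^sub>R h' y) \<le> B" if "y \<in> S" for y
      using B[OF that] onorm_scaleR_left[OF bounded_linear_ident, of "h' y"]
      by (simp add: onorm_id)
  qed (use assms in auto)
  then show ?thesis by simp
qed

lemma Ix_convex: "convex (Ix x1)" by (simp add: Ix_def)

lemma taylor1:
  fixes h h' :: "real \<Rightarrow> complex"
  assumes d: "\<And>y. y \<in> Ix x1 \<Longrightarrow> (h has_vector_derivative h' y) (at y within Ix x1)"
    and B: "\<And>y. y \<in> Ix x1 \<Longrightarrow> cmod (h' y) \<le> B"
    and "x \<in> Ix x1" "0 < x1"
  shows "cmod (h x - h 0) \<le> B * \<bar>x\<bar>"
  using mvt_vec[OF Ix_convex d B, of x 0] assms by (auto simp: Ix_def)

lemma taylor2: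
  fixes h h' h'' :: "real \<Rightarrow> complex"
  assumes d: "\<And>y. y \<in> Ix x1 \<Longrightarrow> (h has_vector_derivative h' y) (at y within Ix x1)"
    and d2: "\<And>y. y \<in> Ix x1 \<Longrightarrow> (h' has_vector_derivative h'' y) (at y within Ix x1)"
    and B: "\<And>y. y \<in> Ix x1 \<Longrightarrow> cmod (h'' y) \<le> B"
    and x: "x \<in> Ix x1" and "0 < x1"
  shows "cmod (h x - h 0 - of_real x * h' 0) \<le> B * x\<^sup>2"
proof -
  define S where "S = {min 0 x .. max 0 x}"
  have SI: "S \<subseteq> Ix x1" using x \<open>0<x1\<close> by (auto simp: S_def Ix_def)
  have "cmod ((\<lambda>y. h y - of_real y * h' 0) x - (\<lambda>y. h y - of_real y * h' 0) 0) \<le> (B * \<bar>x\<bar>) * \<bar>x - 0\<bar>"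
  proof (rule mvt_vec[where h' = "\<lambda>y. h' y - h' 0"])
    show "convex S" by (simp add: S_def)
    show "((\<lambda>y. h y - of_real y * h' 0) has_vector_derivative h' y - h' 0) (at y within S)" if "y \<in> S" for y
    proof -
      have "(h has_vector_derivative h' y) (at y within S)"
        using d SI that has_vector_derivative_within_subset by blast
      moreover have "((\<lambda>y. of_real y * h' 0) has_vector_derivative h' 0) (at y within S)"
        using has_vector_derivative_mult_left[OF has_vector_derivative_of_real[OF DERIV_ident], of "h' 0" "at y within S"]
        by simp
      ultimately show ?thesis by (intro has_vector_derivative_diff) 
    qed
    show "cmod (h' y - h' 0) \<le> B * \<bar>x\<bar>" if "y \<in> S" for y
    proof -
      have "cmod (h' y - h' 0) \<le> B * \<bar>y\<bar>" using taylor1[OF d2 B, of y] that SI \<open>0<x1\<close> by auto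
      also have "\<dots> \<le> B * \<bar>x\<bar>"
      proof -
        have "0 \<le> B" using B[of 0] \<open>0<x1\<close> by (auto simp: Ix_def intro: order_trans[OF norm_ge_zero])
        moreover have "\<bar>y\<bar> \<le> \<bar>x\<bar>" using that by (auto simp: S_def)
        ultimately show ?thesis by (simp add: mult_left_mono)
      qed
      finally show ?thesis .
    qed
  qed (auto simp: S_def)
  then show ?thesis by (simp add: power2_eq_square abs_mult_self_eq mult.assoc algebra_simps)
qed


lemma Ix_compact: "compact (Ix x1)" by (simp add: Ix_def)

lemma sup_facts:
  fixes g :: "real \<Rightarrow> complex"
  assumes "continuous_on (Ix x1) g" "y \<in> Ix x1"
  shows "cmod (g y) \<le> (SUP x\<in>Ix x1. cmod (g x))" "0 \<le> (SUP x\<in>Ix x1. cmod (g x))"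
proof -
  have "compact ((\<lambda>x. cmod (g x)) ` Ix x1)"
    by (intro compact_continuous_image continuous_on_norm assms(1) Ix_compact)
  then have bdd: "bdd_above ((\<lambda>x. cmod (g x)) ` Ix x1)"
    by (simp add: bounded_imp_bdd_above compact_imp_bounded)
  show 1: "cmod (g y) \<le> (SUP x\<in>Ix x1. cmod (g x))"
    using cSUP_upper[OF assms(2) bdd] .
  show "0 \<le> (SUP x\<in>Ix x1. cmod (g x))" using order_trans[OF norm_ge_zero 1] .
qed

lemma C31_bounds:
  fixes g :: "real \<Rightarrow> complex"
  assumes C: "C31_on x1 g" and x1: "0 < x1" and y: "y \<in> Ix x1"
  shows "cmod (g y) \<le> C31_norm x1 g" "cmod (Dx x1 g y) \<le> C31_norm x1 g"
        "cmod (Dx x1 (Dx x1 g) y) \<le> C31_norm x1 g"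
proof -
  let ?g3 = "Dx x1 (Dx x1 (Dx x1 g))"
  from C have d1: "\<forall>x\<in>Ix x1. (g has_vector_derivative Dx x1 g x) (at x within Ix x1)"
    and d2: "\<forall>x\<in>Ix x1. (Dx x1 g has_vector_derivative Dx x1 (Dx x1 g) x) (at x within Ix x1)"
    and d3: "\<forall>x\<in>Ix x1. (Dx x1 (Dx x1 g) has_vector_derivative ?g3 x) (at x within Ix x1)"
    and L: "\<exists>L. L-lipschitz_on (Ix x1) ?g3"
    unfolding C31_on_def by auto
  have c0: "continuous_on (Ix x1) g" using d1 continuous_on_vector_derivative by blast
  have c1: "continuous_on (Ix x1) (Dx x1 g)" using d2 continuous_on_vector_derivative by blast
  have c2: "continuous_on (Ix x1) (Dx x1 (Dx x1 g))" using d3 continuous_on_vector_derivative by blast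
  from L obtain L where L: "L-lipschitz_on (Ix x1) ?g3" by blast
  have c3: "continuous_on (Ix x1) ?g3" using lipschitz_on_continuous_on[OF L] .
  have x1I: "x1 \<in> Ix x1" using x1 by (simp add: Ix_def)
  let ?P = "{(x,y). x \<in> Ix x1 \<and> y \<in> Ix x1 \<and> x \<noteq> y}"
  let ?q = "\<lambda>p. cmod (?g3 (fst p) - ?g3 (snd p)) / \<bar>fst p - snd p\<bar>"
  have Pne: "(x1, -x1) \<in> ?P" using x1 by (simp add: Ix_def)
  have qL: "?q p \<le> L" if "p \<in> ?P" for p
  proof -
    have "dist (?g3 (fst p)) (?g3 (snd p)) \<le> L * dist (fst p) (snd p)"
      using lipschitz_onD[OF L] that by auto
    moreover have "\<bar>fst p - snd p\<bar> > 0" using that by auto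
    ultimately show ?thesis by (simp add: dist_norm dist_real_def divide_le_eq)
  qed
  have "bdd_above (?q ` ?P)" by (rule bdd_aboveI2[where M=L]) (use qL in blast)
  then have "?q (x1, -x1) \<le> (SUP p\<in>?P. ?q p)" by (rule cSUP_upper[OF Pne])
  moreover have "0 \<le> ?q (x1, -x1)" by simp
  ultimately have q0: "0 \<le> (SUP p\<in>?P. ?q p)" by linarith
  note s0 = sup_facts[OF c0 y] and s1 = sup_facts[OF c1 y] and s2 = sup_facts[OF c2 y]
    and s3 = sup_facts[OF c3 y]
  show "cmod (g y) \<le> C31_norm x1 g" "cmod (Dx x1 g y) \<le> C31_norm x1 g"
        "cmod (Dx x1 (Dx x1 g) y) \<le> C31_norm x1 g"
    unfolding C31_norm_def using s0 s1 s2 s3 q0 by linarith+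
qed


lemma normsq_deriv:
  fixes u :: "real \<Rightarrow> complex"
  assumes "(u has_vector_derivative d) (at t within S)"
  shows "((\<lambda>s. (cmod (u s))\<^sup>2) has_real_derivative 2 * Re (cnj (u t) * d)) (at t within S)"
proof -
  have "((\<lambda>s. u s * cnj (u s)) has_vector_derivative (u t * cnj d + d * cnj (u t))) (at t within S)"
    by (intro has_vector_derivative_mult has_vector_derivative_cnj assms)
  then have "((\<lambda>s. Re (u s * cnj (u s))) has_real_derivative Re (u t * cnj d + d * cnj (u t))) (at t within S)"
    by (simp add: has_vector_derivative_complex_iff)
  moreover have "(\<lambda>s. Re (u s * cnj (u s))) = (\<lambda>s. (cmod (u s))\<^sup>2)"
    by (simp add: complex_mult_cnj cmod_power2)
  moreover have "Re (u t * cnj d + d * cnj (u t)) = 2 * Re (cnj (u t) * d)" by simp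
  ultimately show ?thesis by (simp add: mult.commute)
qed

lemma gronwall_pt:
  fixes u :: "real \<Rightarrow> complex"
  assumes c: "0 \<le> c"
    and D: "\<forall>s\<in>{0..\<delta>}. \<exists>d. (u has_vector_derivative d) (at s within {0..\<delta>}) \<and> cmod d \<le> c * cmod (u s)"
    and t: "t \<in> {0..\<delta>}"
  shows "cmod (u t) \<le> cmod (u 0) * exp (c * t)"
proof -
  define v where "v s = (cmod (u s))\<^sup>2 * exp (- (2 * c) * s)" for s
  have cu: "continuous_on {0..\<delta>} u"
    unfolding continuous_on_eq_continuous_within using D has_vector_derivative_continuous by blast
  have "v t \<le> v 0"
  proof (rule DERIV_nonpos_imp_decreasing_open[of 0 t v])
    show "0 \<le> t" using t by simp
    show "continuous_on {0..t} v" unfolding v_def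
      using t by (intro continuous_intros continuous_on_subset[OF cu]) auto
    fix s assume s: "0 < s" "s < t"
    then have sI: "s \<in> {0..\<delta>}" using t by auto
    from D sI obtain d where d: "(u has_vector_derivative d) (at s within {0..\<delta>})"
      and dle: "cmod d \<le> c * cmod (u s)" by blast
    have "at s within {0..\<delta>} = at s" using s t by (intro at_within_Icc_at) auto
    with d have d': "(u has_vector_derivative d) (at s)" by simp
    have e: "((\<lambda>s. exp (- (2 * c) * s)) has_real_derivative exp (- (2 * c) * s) * (- (2 * c))) (at s)"
      by (auto intro!: derivative_eq_intros)
    have "(v has_real_derivative (2 * Re (cnj (u s) * d)) * exp (- (2 * c) * s)
             + (cmod (u s))\<^sup>2 * (exp (- (2 * c) * s) * (- (2 * c)))) (at s)"
      unfolding v_def using DERIV_mult[OF normsq_deriv[OF d'] e] by (simp add: algebra_simps)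
    moreover have "(2 * Re (cnj (u s) * d)) * exp (- (2 * c) * s)
             + (cmod (u s))\<^sup>2 * (exp (- (2 * c) * s) * (- (2 * c))) \<le> 0"
    proof -
      have "Re (cnj (u s) * d) \<le> cmod (cnj (u s) * d)" by (rule complex_Re_le_cmod)
      also have "\<dots> = cmod (u s) * cmod d" by (simp add: norm_mult)
      also have "\<dots> \<le> cmod (u s) * (c * cmod (u s))" by (intro mult_left_mono dle) simp
      finally have "Re (cnj (u s) * d) \<le> c * (cmod (u s))\<^sup>2" by (simp only: power2_eq_square ac_simps)
      then have "(2 * Re (cnj (u s) * d) - 2 * c * (cmod (u s))\<^sup>2) * exp (- (2 * c) * s) \<le> 0"
        by (intro mult_nonpos_nonneg) auto
      then show ?thesis by (simp add: algebra_simps)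
    qed
    ultimately show "\<exists>y. (v has_real_derivative y) (at s) \<and> y \<le> 0" by blast
  qed
  then have "(cmod (u t))\<^sup>2 * exp (- (2 * c) * t) \<le> (cmod (u 0))\<^sup>2" by (simp add: v_def)
  then have "(cmod (u t))\<^sup>2 \<le> (cmod (u 0))\<^sup>2 * exp (2 * c * t)"
    by (simp add: exp_minus field_simps)
  also have "\<dots> = (cmod (u 0) * exp (c * t))\<^sup>2"
    by (simp add: power2_eq_square exp_add[symmetric] algebra_simps)
  finally show ?thesis by (rule power2_le_imp_le) simp
qed


definition Sop :: "real \<Rightarrow> real \<Rightarrow> complex \<Rightarrow> complex \<Rightarrow> complex \<Rightarrow> complex \<Rightarrow> complex" where
  "Sop \<alpha> \<beta> \<mu> z p q = complex_of_real ((cmod z)\<^sup>2) * q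
        + complex_of_real \<alpha> * z * complex_of_real ((cmod p)\<^sup>2)
        + complex_of_real \<beta> * cnj z * p\<^sup>2
        + \<mu> * complex_of_real ((cmod z)\<^sup>2) * z"

lemma Sop_bound:
  assumes "cmod z \<le> M" "cmod p \<le> M" "cmod q \<le> M"
  shows "cmod (Sop \<alpha> \<beta> \<mu> z p q) \<le> (1 + \<bar>\<alpha>\<bar> + \<bar>\<beta>\<bar> + cmod \<mu>) * M\<^sup>2 * cmod z"
proof -
  have M0: "0 \<le> M" using assms(1) norm_ge_zero order_trans by blast
  have "cmod (Sop \<alpha> \<beta> \<mu> z p q) \<le> (cmod z)\<^sup>2 * cmod q + \<bar>\<alpha>\<bar> * cmod z * (cmod p)\<^sup>2
      + \<bar>\<beta>\<bar> * cmod z * (cmod p)\<^sup>2 + cmod \<mu> * (cmod z)\<^sup>2 * cmod z"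
    unfolding Sop_def
    by (rule order_trans[OF norm_triangle_ineq] order_trans[OF add_mono[OF norm_triangle_ineq order_refl]]
        order_trans[OF add_mono[OF add_mono[OF norm_triangle_ineq order_refl] order_refl]])+
       (simp add: norm_mult norm_power)
  also have "\<dots> \<le> cmod z * (M * M) + \<bar>\<alpha>\<bar> * cmod z * M\<^sup>2
      + \<bar>\<beta>\<bar> * cmod z * M\<^sup>2 + cmod \<mu> * M\<^sup>2 * cmod z"
  proof -
    have "(cmod z)\<^sup>2 * cmod q \<le> cmod z * (M * M)"
      unfolding power2_eq_square mult.assoc using assms M0 by (intro mult_left_mono mult_mono) auto
    moreover have "(cmod p)\<^sup>2 \<le> M\<^sup>2" using assms(2) by (simp add: power_mono)
    moreover have "(cmod z)\<^sup>2 \<le> M\<^sup>2" using assms(1) by (simp add: power_mono)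
    ultimately show ?thesis
      by (intro add_mono mult_left_mono mult_right_mono) auto
  qed
  also have "\<dots> = (1 + \<bar>\<alpha>\<bar> + \<bar>\<beta>\<bar> + cmod \<mu>) * M\<^sup>2 * cmod z"
    by (simp add: algebra_simps power2_eq_square)
  finally show ?thesis .
qed

lemma Sop_Im:
  "Im (cnj z * Sop \<alpha> \<beta> \<mu> z p q) = (cmod z)\<^sup>2 * Im (cnj z * q) + \<beta> * Im ((cnj z * p)\<^sup>2) + (cmod z)\<^sup>2 * (cmod z)\<^sup>2 * Im \<mu>"
proof -
  have zz: "cnj z * z = complex_of_real ((cmod z)\<^sup>2)" by (metis complex_norm_square mult.commute of_real_power)
  have "cnj z * Sop \<alpha> \<beta> \<mu> z p q = complex_of_real ((cmod z)\<^sup>2) * (cnj z * q)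
      + complex_of_real \<alpha> * (cnj z * z) * complex_of_real ((cmod p)\<^sup>2) + complex_of_real \<beta> * (cnj z * p)\<^sup>2
      + \<mu> * complex_of_real ((cmod z)\<^sup>2) * (cnj z * z)"
    unfolding Sop_def by (simp add: algebra_simps power2_eq_square)
  also have "\<dots> = complex_of_real ((cmod z)\<^sup>2) * (cnj z * q)
      + complex_of_real (\<alpha> * (cmod z)\<^sup>2 * (cmod p)\<^sup>2) + complex_of_real \<beta> * (cnj z * p)\<^sup>2
      + \<mu> * complex_of_real ((cmod z)\<^sup>2 * (cmod z)\<^sup>2)"
    unfolding zz by (simp add: algebra_simps)
  finally have "cnj z * Sop \<alpha> \<beta> \<mu> z p q = complex_of_real ((cmod z)\<^sup>2) * (cnj z * q)
      + complex_of_real (\<alpha> * (cmod z)\<^sup>2 * (cmod p)\<^sup>2) + complex_of_real \<beta> * (cnj z * p)\<^sup>2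
      + \<mu> * complex_of_real ((cmod z)\<^sup>2 * (cmod z)\<^sup>2)" .
  then show ?thesis by simp
qed


lemma Im_bound:
  fixes h h' h'' :: "real \<Rightarrow> complex"
  assumes d: "\<And>y. y \<in> Ix x1 \<Longrightarrow> (h has_vector_derivative h' y) (at y within Ix x1)"
    and d2: "\<And>y. y \<in> Ix x1 \<Longrightarrow> (h' has_vector_derivative h'' y) (at y within Ix x1)"
    and B1: "\<And>y. y \<in> Ix x1 \<Longrightarrow> cmod (h' y) \<le> M"
    and B2: "\<And>y. y \<in> Ix x1 \<Longrightarrow> cmod (h'' y) \<le> M"
    and h0: "h 0 = 0" and x: "x \<in> Ix x1" and x1: "0 < x1"
  shows "\<bar>Im (cnj (h x) * h' x)\<bar> \<le> 2 * M\<^sup>2 * x\<^sup>2"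
proof -
  define b where "b = h' 0"
  have "0 \<in> Ix x1" using x1 by (simp add: Ix_def)
  then have bM: "cmod b \<le> M" using B1 by (simp add: b_def)
  have M0: "0 \<le> M" using bM norm_ge_zero order_trans by blast
  have A: "cmod (h x) \<le> M * \<bar>x\<bar>" using taylor1[OF d B1 x x1] h0 by simp
  have B: "cmod (h x - of_real x * b) \<le> M * x\<^sup>2" using taylor2[OF d d2 B2 x x1] h0 by (simp add: b_def)
  have Cc: "cmod (h' x - b) \<le> M * \<bar>x\<bar>" using taylor1[OF d2 B2 x x1] by (simp add: b_def)
  have bb: "cnj b * b = of_real ((cmod b)\<^sup>2)" by (metis complex_norm_square mult.commute of_real_power)
  have eq: "cnj (h x) * h' x - of_real (x * (cmod b)\<^sup>2) = cnj (h x) * (h' x - b) + cnj (h x - of_real x * b) * b"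
    using complex_norm_square[of b] by (simp add: algebra_simps)
  have "\<bar>Im (cnj (h x) * h' x)\<bar> = \<bar>Im (cnj (h x) * h' x - of_real (x * (cmod b)\<^sup>2))\<bar>" by simp
  also have "\<dots> \<le> cmod (cnj (h x) * h' x - of_real (x * (cmod b)\<^sup>2))" by (rule abs_Im_le_cmod)
  also have "\<dots> \<le> cmod (h x) * cmod (h' x - b) + cmod (h x - of_real x * b) * cmod b"
  proof -
    have "cmod (cnj (h x) - complex_of_real x * cnj b) = cmod (h x - of_real x * b)"
      by (metis complex_cnj_diff complex_cnj_mult complex_cnj_complex_of_real complex_mod_cnj)
    then show ?thesis
      unfolding eq by (intro order_trans[OF norm_triangle_ineq]) (simp add: norm_mult)
  qed
  also have "\<dots> \<le> (M * \<bar>x\<bar>) * (M * \<bar>x\<bar>) + (M * x\<^sup>2) * M"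
    using A B Cc bM M0 by (intro add_mono mult_mono) auto
  also have "\<dots> = 2 * M\<^sup>2 * x\<^sup>2" by (simp add: power2_eq_square algebra_simps)
  finally show ?thesis .
qed

lemma lower_bound:
  fixes h h' h'' :: "real \<Rightarrow> complex"
  assumes d: "\<And>y. y \<in> Ix x1 \<Longrightarrow> (h has_vector_derivative h' y) (at y within Ix x1)"
    and d2: "\<And>y. y \<in> Ix x1 \<Longrightarrow> (h' has_vector_derivative h'' y) (at y within Ix x1)"
    and B2: "\<And>y. y \<in> Ix x1 \<Longrightarrow> cmod (h'' y) \<le> B"
    and h0: "h 0 = 0" and h'0: "h' 0 = of_real a" and a: "0 < a" and Bx: "B * x1 < a / 2"
    and x: "x \<in> Ix x1" and x1: "0 < x1"
  shows "a * \<bar>x\<bar> \<le> 2 * cmod (h x)"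
proof -
  have B0: "0 \<le> B" using B2[OF x] norm_ge_zero order_trans by blast
  have xx: "\<bar>x\<bar> \<le> x1" using x by (auto simp: Ix_def)
  have T: "cmod (h x - of_real x * of_real a) \<le> B * x\<^sup>2" using taylor2[OF d d2 B2 x x1] h0 h'0 by simp
  have "B * x\<^sup>2 = (B * \<bar>x\<bar>) * \<bar>x\<bar>" by (simp add: power2_eq_square)
  also have "\<dots> \<le> (B * x1) * \<bar>x\<bar>" using B0 xx by (intro mult_right_mono mult_left_mono) auto
  also have "\<dots> \<le> (a / 2) * \<bar>x\<bar>" using Bx by (intro mult_right_mono) auto
  finally have T2: "cmod (h x - of_real x * of_real a) \<le> (a / 2) * \<bar>x\<bar>" using T by linarith
  have "cmod (of_real x * of_real a :: complex) = a * \<bar>x\<bar>" using a by (simp add: norm_mult)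
  moreover have "cmod (of_real x * of_real a :: complex) \<le> cmod (h x) + cmod (h x - of_real x * of_real a)"
    by (metis norm_triangle_ineq4 diff_diff_eq2 diff_self diff_zero add.commute norm_minus_commute
        order_trans norm_triangle_sub)
  ultimately show ?thesis using T2 by linarith
qed


lemma final_ineq:
  fixes F F0 M a E X G I V m \<beta> C t :: real
  assumes F00: "0 \<le> F0" and M0: "0 \<le> M" and a0: "0 < a" and E1: "1 \<le> E" and F0: "0 \<le> F"
    and FE: "F \<le> F0 * E" and FM: "F \<le> M" and G0: "0 \<le> G" and GF: "G \<le> F * M"
    and I: "I \<le> 8 * M\<^sup>2 * F0\<^sup>2 / a\<^sup>2" and I0: "0 \<le> I" and m0: "0 \<le> m"
    and V: "V \<le> F\<^sup>2 * (F * M) + \<bar>\<beta>\<bar> * (2 * G * I) + F\<^sup>2 * F\<^sup>2 * m"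
    and EX: "E ^ 3 \<le> X" and C: "2 + 32 * \<bar>\<beta>\<bar> + 2 * m \<le> C" and t0: "0 \<le> t"
  shows "2 * V \<le> C * M * X * (1 + M / a) ^ 3 * (F0 ^ 3 + t * M ^ 3 * F0\<^sup>2)"
proof -
  define Q where "Q = (1 + M / a) ^ 3"
  define P where "P = M * E ^ 3 * F0 ^ 3"
  have Ma0: "0 \<le> M / a" using M0 a0 by simp
  have Q1: "1 \<le> Q" unfolding Q_def using Ma0 by (simp add: one_le_power)
  have MaQ: "(M / a)\<^sup>2 \<le> Q"
  proof -
    have "(M / a)\<^sup>2 \<le> (1 + M / a)\<^sup>2" using Ma0 by (intro power_mono) auto
    also have "\<dots> \<le> (1 + M / a) ^ 3" using Ma0 by (intro power_increasing) auto
    finally show ?thesis by (simp add: Q_def)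
  qed
  have P0: "0 \<le> P" unfolding P_def using M0 E1 F00 by simp
  have F3: "F ^ 3 \<le> F0 ^ 3 * E ^ 3"
    using power_mono[OF FE F0, of 3] by (simp add: power_mult_distrib)
  have t1: "F\<^sup>2 * (F * M) \<le> P"
  proof -
    have "F\<^sup>2 * (F * M) = M * F ^ 3" by (simp add: power2_eq_square power3_eq_cube)
    also have "\<dots> \<le> M * (F0 ^ 3 * E ^ 3)" using F3 M0 by (rule mult_left_mono)
    finally show ?thesis by (simp add: P_def ac_simps)
  qed
  have t3: "F\<^sup>2 * F\<^sup>2 \<le> P"
  proof -
    have "F\<^sup>2 * F\<^sup>2 = F * F ^ 3" by (simp add: power2_eq_square power3_eq_cube)
    also have "\<dots> \<le> M * (F0 ^ 3 * E ^ 3)" using F3 FM F0 M0 by (intro mult_mono) auto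
    finally show ?thesis by (simp add: P_def ac_simps)
  qed
  have t2: "G * I \<le> 8 * P * Q"
  proof -
    have "G * I \<le> (F * M) * (8 * M\<^sup>2 * F0\<^sup>2 / a\<^sup>2)" using GF I G0 I0 F0 M0 by (intro mult_mono) auto
    also have "\<dots> \<le> (F0 * E * M) * (8 * M\<^sup>2 * F0\<^sup>2 / a\<^sup>2)"
      using FE M0 by (intro mult_right_mono) (auto intro: mult_right_mono)
    also have "\<dots> = 8 * (M * E * F0 ^ 3) * (M / a)\<^sup>2"
      by (simp add: power2_eq_square power3_eq_cube field_simps)
    also have "\<dots> \<le> 8 * P * Q"
    proof -
      have "E \<le> E ^ 3" using E1 by (simp add: power_increasing[of 1 3 E, simplified])
      then have "M * E * F0 ^ 3 \<le> P" unfolding P_def using M0 F00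
        by (simp add: mult_left_mono mult_right_mono)
      then show ?thesis using MaQ P0 Ma0 M0 E1 F00 by (intro mult_mono) auto
    qed
    finally show ?thesis .
  qed
  have "2 * V \<le> 2 * P + 2 * \<bar>\<beta>\<bar> * (2 * (8 * P * Q)) + 2 * P * m"
  proof -
    have "\<bar>\<beta>\<bar> * (2 * G * I) \<le> \<bar>\<beta>\<bar> * (2 * (8 * P * Q))" using t2 by (intro mult_left_mono) auto
    moreover have "F\<^sup>2 * F\<^sup>2 * m \<le> P * m" using t3 m0 by (rule mult_right_mono)
    ultimately show ?thesis using V t1 by linarith
  qed
  also have "\<dots> \<le> (2 + 32 * \<bar>\<beta>\<bar> + 2 * m) * P * Q"
  proof -
    have "2 * P \<le> 2 * P * Q" "2 * P * m \<le> 2 * P * m * Q"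
      using Q1 P0 m0 mult_left_mono[OF Q1, of "2 * P"] mult_left_mono[OF Q1, of "2 * P * m"] by auto
    then show ?thesis by (simp add: algebra_simps)
  qed
  also have "\<dots> \<le> C * P * Q" using C P0 Q1 by (intro mult_right_mono) auto
  also have "\<dots> \<le> C * M * X * Q * F0 ^ 3"
  proof -
    have "P \<le> M * X * F0 ^ 3" unfolding P_def using EX M0 F00 by (intro mult_right_mono mult_left_mono) auto
    moreover have "0 \<le> C" using C m0 by linarith
    ultimately show ?thesis using Q1 by (simp add: mult_left_mono mult_right_mono ac_simps)
  qed
  also have "\<dots> \<le> C * M * X * Q * (F0 ^ 3 + t * M ^ 3 * F0\<^sup>2)"
  proof -
    have "0 \<le> C * M * X * Q"
      using C m0 M0 Q1 order_trans[OF _ EX, of 0] E1 by (intro mult_nonneg_nonneg) auto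
    moreover have "0 \<le> t * M ^ 3 * F0\<^sup>2" using t0 M0 by simp
    ultimately show ?thesis by (intro mult_left_mono) auto
  qed
  finally show ?thesis by (simp add: Q_def)
qed


theorem proposition2p6:
  fixes \<alpha>1 \<beta>1 :: real and \<mu>1 :: complex and x1 \<delta> :: real
  assumes "0 < x1" and "x1 < 1" and "0 < \<delta>"
  shows "\<exists>C>0. \<forall>f :: real \<Rightarrow> real \<Rightarrow> complex.
     (\<forall>t\<in>{0..\<delta>}. C31_on x1 (f t))
     \<and> bounded ((\<lambda>t. C31_norm x1 (f t)) ` {0..\<delta>})
     \<and> solves_eq \<alpha>1 \<beta>1 \<mu>1 x1 \<delta> f
     \<and> f 0 0 = 0
     \<and> Im (Dx x1 (f 0) 0) = 0 \<and> Re (Dx x1 (f 0) 0) > 0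
     \<and> (SUP x\<in>Ix x1. cmod (Dx x1 (Dx x1 (f 0)) x)) * x1 < Re (Dx x1 (f 0) 0) / 2
     \<longrightarrow> (let M = (SUP t\<in>{0..\<delta>}. C31_norm x1 (f t)); a = Re (Dx x1 (f 0) 0) in
          \<forall>t\<in>{0..\<delta>}. \<forall>x\<in>Ix x1.
            cmod (f t x) \<le> cmod (f 0 x) * exp (C * M\<^sup>2 * t)
            \<and> \<bar>vector_derivative (\<lambda>s. (cmod (f s x))\<^sup>2) (at t within {0..\<delta>})\<bar>
                \<le> C * M * exp (C * M\<^sup>2 * \<delta>) * (1 + M / a) ^ 3
                   * (cmod (f 0 x) ^ 3 + t * M ^ 3 * (cmod (f 0 x))\<^sup>2))"
proof -
  note x1 = \<open>0 < x1\<close> and x1' = \<open>x1 < 1\<close> and \<delta>0 = \<open>0 < \<delta>\<close>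
  define K where "K = 1 + \<bar>\<alpha>1\<bar> + \<bar>\<beta>1\<bar> + cmod \<mu>1"
  define C where "C = 50 * K"
  have K1: "1 \<le> K" unfolding K_def by simp
  have C0: "0 < C" unfolding C_def using K1 by simp
  show ?thesis
  proof (intro exI[of _ C] conjI allI impI C0)
    fix f :: "real \<Rightarrow> real \<Rightarrow> complex"
    assume H: "(\<forall>t\<in>{0..\<delta>}. C31_on x1 (f t))
     \<and> bounded ((\<lambda>t. C31_norm x1 (f t)) ` {0..\<delta>})
     \<and> solves_eq \<alpha>1 \<beta>1 \<mu>1 x1 \<delta> f
     \<and> f 0 0 = 0
     \<and> Im (Dx x1 (f 0) 0) = 0 \<and> Re (Dx x1 (f 0) 0) > 0
     \<and> (SUP x\<in>Ix x1. cmod (Dx x1 (Dx x1 (f 0)) x)) * x1 < Re (Dx x1 (f 0) 0) / 2"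
    then have Hreg: "\<And>t. t \<in> {0..\<delta>} \<Longrightarrow> C31_on x1 (f t)"
      and Hbdd: "bounded ((\<lambda>t. C31_norm x1 (f t)) ` {0..\<delta>})"
      and Hsol: "solves_eq \<alpha>1 \<beta>1 \<mu>1 x1 \<delta> f"
      and Hf00: "f 0 0 = 0"
      and HIm: "Im (Dx x1 (f 0) 0) = 0" and Ha: "Re (Dx x1 (f 0) 0) > 0"
      and Hsup: "(SUP x\<in>Ix x1. cmod (Dx x1 (Dx x1 (f 0)) x)) * x1 < Re (Dx x1 (f 0) 0) / 2"
      by auto
    define M where "M = (SUP t\<in>{0..\<delta>}. C31_norm x1 (f t))"
    define a where "a = Re (Dx x1 (f 0) 0)"
    have T0: "0 \<in> {0..\<delta>}" using \<delta>0 by simp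
    have I0: "0 \<in> Ix x1" using x1 by (simp add: Ix_def)
    have MT: "C31_norm x1 (f t) \<le> M" if "t \<in> {0..\<delta>}" for t
      unfolding M_def by (rule cSUP_upper[OF that bounded_imp_bdd_above[OF Hbdd]])
    have bnd: "cmod (f t y) \<le> M" "cmod (Dx x1 (f t) y) \<le> M" "cmod (Dx x1 (Dx x1 (f t)) y) \<le> M"
      if "t \<in> {0..\<delta>}" "y \<in> Ix x1" for t y
      using C31_bounds[OF Hreg[OF that(1)] x1 that(2)] MT[OF that(1)] by linarith+
    have M0: "0 \<le> M" using bnd(1)[OF T0 I0] norm_ge_zero order_trans by blast
    have dv1: "(f t has_vector_derivative Dx x1 (f t) y) (at y within Ix x1)"
      and dv2: "(Dx x1 (f t) has_vector_derivative Dx x1 (Dx x1 (f t)) y) (at y within Ix x1)"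
      and dv3: "(Dx x1 (Dx x1 (f t)) has_vector_derivative Dx x1 (Dx x1 (Dx x1 (f t))) y) (at y within Ix x1)"
      if "t \<in> {0..\<delta>}" "y \<in> Ix x1" for t y
      using Hreg[OF that(1)] that(2) unfolding C31_on_def by auto
    have pde: "\<exists>ft. ((\<lambda>s. f s x) has_vector_derivative ft) (at t within {0..\<delta>})
                 \<and> ft = \<i> * Sop \<alpha>1 \<beta>1 \<mu>1 (f t x) (Dx x1 (f t) x) (Dx x1 (Dx x1 (f t)) x)"
      if "t \<in> {0..\<delta>}" "x \<in> Ix x1" for t x
    proof -
      from Hsol that obtain ft where ft: "((\<lambda>s. f s x) has_vector_derivative ft) (at t within {0..\<delta>})"
        and eq0: "\<i> * ft + complex_of_real ((cmod (f t x))\<^sup>2) * Dx x1 (Dx x1 (f t)) x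
        + complex_of_real \<alpha>1 * f t x * complex_of_real ((cmod (Dx x1 (f t) x))\<^sup>2)
        + complex_of_real \<beta>1 * cnj (f t x) * (Dx x1 (f t) x)\<^sup>2
        + \<mu>1 * complex_of_real ((cmod (f t x))\<^sup>2) * f t x = 0"
        unfolding solves_eq_def by blast
      have eq: "\<i> * ft + Sop \<alpha>1 \<beta>1 \<mu>1 (f t x) (Dx x1 (f t) x) (Dx x1 (Dx x1 (f t)) x) = 0"
        using eq0 unfolding Sop_def by (simp add: add.assoc)
      from eq have "Sop \<alpha>1 \<beta>1 \<mu>1 (f t x) (Dx x1 (f t) x) (Dx x1 (Dx x1 (f t)) x) = - (\<i> * ft)"
        by (simp add: eq_neg_iff_add_eq_0 add.commute)
      then have "ft = \<i> * Sop \<alpha>1 \<beta>1 \<mu>1 (f t x) (Dx x1 (f t) x) (Dx x1 (Dx x1 (f t)) x)" by simp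
      with ft show ?thesis by blast
    qed
    have part1: "cmod (f t x) \<le> cmod (f 0 x) * exp (K * M\<^sup>2 * t)"
      if t: "t \<in> {0..\<delta>}" and x: "x \<in> Ix x1" for t x
    proof (rule gronwall_pt[where u = "\<lambda>s. f s x", OF _ _ t])
      show "0 \<le> K * M\<^sup>2" using K1 by simp
      show "\<forall>s\<in>{0..\<delta>}. \<exists>d. ((\<lambda>s. f s x) has_vector_derivative d) (at s within {0..\<delta>}) \<and> cmod d \<le> K * M\<^sup>2 * cmod (f s x)"
      proof
        fix s assume s: "s \<in> {0..\<delta>}"
        from pde[OF s x] obtain d where d: "((\<lambda>s. f s x) has_vector_derivative d) (at s within {0..\<delta>})"
          and dd: "d = \<i> * Sop \<alpha>1 \<beta>1 \<mu>1 (f s x) (Dx x1 (f s) x) (Dx x1 (Dx x1 (f s)) x)" by blast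
        have "cmod d \<le> K * M\<^sup>2 * cmod (f s x)"
          unfolding dd K_def using Sop_bound[OF bnd[OF s x]] by (simp add: norm_mult)
        with d show "\<exists>d. ((\<lambda>s. f s x) has_vector_derivative d) (at s within {0..\<delta>}) \<and> cmod d \<le> K * M\<^sup>2 * cmod (f s x)"
          by blast
      qed
    qed
    have ft0: "f t 0 = 0" if "t \<in> {0..\<delta>}" for t
      using part1[OF that I0] Hf00 by simp
    show "let M = (SUP t\<in>{0..\<delta>}. C31_norm x1 (f t)); a = Re (Dx x1 (f 0) 0) in
          \<forall>t\<in>{0..\<delta>}. \<forall>x\<in>Ix x1.
            cmod (f t x) \<le> cmod (f 0 x) * exp (C * M\<^sup>2 * t)
            \<and> \<bar>vector_derivative (\<lambda>s. (cmod (f s x))\<^sup>2) (at t within {0..\<delta>})\<bar>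
                \<le> C * M * exp (C * M\<^sup>2 * \<delta>) * (1 + M / a) ^ 3
                   * (cmod (f 0 x) ^ 3 + t * M ^ 3 * (cmod (f 0 x))\<^sup>2)"
      unfolding Let_def M_def[symmetric] a_def[symmetric]
    proof (intro ballI conjI)
      fix t x assume t: "t \<in> {0..\<delta>}" and x: "x \<in> Ix x1"
      have E1: "1 \<le> exp (K * M\<^sup>2 * t)" using K1 t by simp
      show "cmod (f t x) \<le> cmod (f 0 x) * exp (C * M\<^sup>2 * t)"
      proof -
        have "exp (K * M\<^sup>2 * t) \<le> exp (C * M\<^sup>2 * t)"
          unfolding C_def using K1 t by (intro exp_mono mult_right_mono) auto
        then show ?thesis using part1[OF t x] by (meson mult_left_mono norm_ge_zero order_trans)
      qed
      show "\<bar>vector_derivative (\<lambda>s. (cmod (f s x))\<^sup>2) (at t within {0..\<delta>})\<bar>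
                \<le> C * M * exp (C * M\<^sup>2 * \<delta>) * (1 + M / a) ^ 3
                   * (cmod (f 0 x) ^ 3 + t * M ^ 3 * (cmod (f 0 x))\<^sup>2)"
      proof -
        let ?F = "cmod (f t x)" and ?Fz = "cmod (f 0 x)"
        let ?D1 = "Dx x1 (f t) x" and ?D2 = "Dx x1 (Dx x1 (f t)) x"
        let ?S = "Sop \<alpha>1 \<beta>1 \<mu>1 (f t x) ?D1 ?D2"
        let ?g = "cnj (f t x) * ?D1"
        define V where "V = \<bar>Im (cnj (f t x) * ?S)\<bar>"
        define G where "G = cmod ?g"
        define I where "I = \<bar>Im ?g\<bar>"
        from pde[OF t x] obtain ft where ftd: "((\<lambda>s. f s x) has_vector_derivative ft) (at t within {0..\<delta>})"
          and fteq: "ft = \<i> * ?S" by blast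
        have "((\<lambda>s. (cmod (f s x))\<^sup>2) has_real_derivative 2 * Re (cnj (f t x) * ft)) (at t within {0..\<delta>})"
          by (rule normsq_deriv[OF ftd])
        then have "vector_derivative (\<lambda>s. (cmod (f s x))\<^sup>2) (at t within {0..\<delta>}) = 2 * Re (cnj (f t x) * ft)"
          using vector_derivative_within_closed_interval[OF \<delta>0 t]
          by (simp add: has_real_derivative_iff_has_vector_derivative)
        also have "\<dots> = - 2 * Im (cnj (f t x) * ?S)" unfolding fteq
          by (simp add: mult.left_commute[of "cnj (f t x)" \<i>])
        finally have vd: "\<bar>vector_derivative (\<lambda>s. (cmod (f s x))\<^sup>2) (at t within {0..\<delta>})\<bar> = 2 * V"
          unfolding V_def by (simp only: abs_mult abs_neg_numeral)
        have b1: "cmod ?D1 \<le> M" and b2: "cmod ?D2 \<le> M" and bF: "?F \<le> M" using bnd[OF t x] by auto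
        have GF: "G \<le> ?F * M" unfolding G_def using b1 by (simp add: norm_mult mult_left_mono)
        have Vb: "V \<le> ?F\<^sup>2 * (?F * M) + \<bar>\<beta>1\<bar> * (2 * G * I) + ?F\<^sup>2 * ?F\<^sup>2 * cmod \<mu>1"
        proof -
          have i1: "\<bar>Im (cnj (f t x) * ?D2)\<bar> \<le> ?F * M"
            using abs_Im_le_cmod[of "cnj (f t x) * ?D2"] b2
            by (simp add: norm_mult) (meson mult_left_mono norm_ge_zero order_trans)
          have i2: "\<bar>Im (?g\<^sup>2)\<bar> \<le> 2 * G * I"
          proof -
            have "\<bar>Im (?g\<^sup>2)\<bar> = 2 * \<bar>Re ?g\<bar> * I" unfolding I_def by (simp only: Im_power2 abs_mult abs_numeral)
            also have "\<dots> \<le> 2 * G * I" unfolding G_def I_def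
              by (intro mult_right_mono mult_left_mono abs_Re_le_cmod) auto
            finally show ?thesis .
          qed
          have i3: "\<bar>Im \<mu>1\<bar> \<le> cmod \<mu>1" by (rule abs_Im_le_cmod)
          have "V \<le> ?F\<^sup>2 * \<bar>Im (cnj (f t x) * ?D2)\<bar> + \<bar>\<beta>1\<bar> * \<bar>Im (?g\<^sup>2)\<bar> + ?F\<^sup>2 * ?F\<^sup>2 * \<bar>Im \<mu>1\<bar>"
          proof -
            have gen: "\<bar>A * B + c * d + E * Fv\<bar> \<le> A * \<bar>B\<bar> + \<bar>c\<bar> * \<bar>d\<bar> + E * \<bar>Fv\<bar>"
              if "0 \<le> A" "0 \<le> E" for A B c d E Fv :: real
            proof -
              have "\<bar>A * B + c * d + E * Fv\<bar> \<le> \<bar>A * B\<bar> + \<bar>c * d\<bar> + \<bar>E * Fv\<bar>" by linarith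
              then show ?thesis using that by (simp add: abs_mult)
            qed
            show ?thesis unfolding V_def Sop_Im by (rule gen) simp_all
          qed
          also have "\<dots> \<le> ?F\<^sup>2 * (?F * M) + \<bar>\<beta>1\<bar> * (2 * G * I) + ?F\<^sup>2 * ?F\<^sup>2 * cmod \<mu>1"
            using i1 i2 i3 by (intro add_mono mult_left_mono) auto
          finally show ?thesis .
        qed
        have d2c: "continuous_on (Ix x1) (Dx x1 (Dx x1 (f 0)))"
          using dv3[OF T0] continuous_on_vector_derivative by blast
        have h'0: "Dx x1 (f 0) 0 = of_real a" using HIm by (simp add: a_def complex_eq_iff)
        have low: "a * \<bar>x\<bar> \<le> 2 * ?Fz"
          by (rule lower_bound[OF dv1[OF T0] dv2[OF T0] sup_facts(1)[OF d2c] Hf00 h'0 _ _ x x1])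
             (use Ha Hsup in \<open>auto simp: a_def\<close>)
        have a0: "0 < a" using Ha by (simp add: a_def)
        have xsq: "x\<^sup>2 \<le> 4 * ?Fz\<^sup>2 / a\<^sup>2"
        proof -
          have "(a * \<bar>x\<bar>)\<^sup>2 \<le> (2 * ?Fz)\<^sup>2" using low a0 by (intro power_mono) auto
          then have "a\<^sup>2 * x\<^sup>2 \<le> 4 * ?Fz\<^sup>2" by (simp add: power_mult_distrib)
          then show ?thesis using a0 by (simp add: field_simps)
        qed
        have Ib: "I \<le> 8 * M\<^sup>2 * ?Fz\<^sup>2 / a\<^sup>2"
        proof -
          have "I \<le> 2 * M\<^sup>2 * x\<^sup>2" unfolding I_def
            by (rule Im_bound[OF dv1[OF t] dv2[OF t] bnd(2)[OF t] bnd(3)[OF t] ft0[OF t] x x1])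
          also have "\<dots> \<le> 2 * M\<^sup>2 * (4 * ?Fz\<^sup>2 / a\<^sup>2)" using xsq by (intro mult_left_mono) auto
          finally show ?thesis by simp
        qed
        have EX: "exp (K * M\<^sup>2 * t) ^ 3 \<le> exp (C * M\<^sup>2 * \<delta>)"
        proof -
          have "exp (K * M\<^sup>2 * t) ^ 3 = exp (3 * (K * M\<^sup>2 * t))"
            using exp_of_nat_mult[of 3 "K * M\<^sup>2 * t"] by simp
          also have "\<dots> \<le> exp (C * M\<^sup>2 * \<delta>)"
          proof (rule exp_mono)
            have "3 * t \<le> 50 * \<delta>" using t \<delta>0 by auto
            then have "(K * M\<^sup>2) * (3 * t) \<le> (K * M\<^sup>2) * (50 * \<delta>)" using K1 by (intro mult_left_mono) auto
            then show "3 * (K * M\<^sup>2 * t) \<le> C * M\<^sup>2 * \<delta>" by (simp add: C_def algebra_simps)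
          qed
          finally show ?thesis .
        qed
        have "2 * V \<le> C * M * exp (C * M\<^sup>2 * \<delta>) * (1 + M / a) ^ 3 * (?Fz ^ 3 + t * M ^ 3 * ?Fz\<^sup>2)"
          by (rule final_ineq[OF norm_ge_zero M0 a0 E1 norm_ge_zero part1[OF t x] bF _ GF Ib _ _ Vb EX])
             (use t in \<open>auto simp: G_def I_def C_def K_def\<close>)
        then show ?thesis using vd by simp
      qed
    qed
  qed
qed

end
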